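(* Let $\Omega\subseteq\mathbb{R}^n$ be open, $u:\Omega\to\mathbb{R}^N$ a map continuous at $x\in\Omega$, and $\xi\in\mathbb{S}^{N-1}$. (a) $J^{1,\xi}u(x)$ is a convex subset of $\mathbb{R}^{N\times n}$ and $J^{2,\xi}u(x)$ is a convex subset of $\mathbb{R}^{N\times n}\times(\mathbb{R}^N\otimes\mathbb{R}^{n\times n}_s)$. (b) $J^{1,\xi}u(x)$ is closed in $\mathbb{R}^{N\times n}$, and for every $P\in\mathbb{R}^{N\times n}$ the set $\{\mathbf{X}\in\mathbb{R}^N\otimes\mathbb{R}^{n\times n}_s:(P,\mathbf{X})\in J^{2,\xi}u(x)\}$ is closed. (c) If $J^{2,\xi}u(x)\ne\emptyset$ then it has infinite diameter; moreover, if $(P,\mathbf{X})\in J^{2,\xi}u(x)$ then $(P,\mathbf{X}+\xi\otimes A)\in J^{2,\xi}u(x)$ for every positive semidefinite $A\in\mathbb{R}^{n\times n}_s$.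
   Context: $\mathbb{R}^N\otimes\mathbb{R}^{n\times n}_s$: arrays $\mathbf{X}=(\mathbf{X}_{\alpha ij})$ symmetric in $i,j$; $\mathbf{X}:z\otimes z$ has components $\sum_{ij}\mathbf{X}_{\alpha ij}z_iz_j$; $\xi\otimes A:=(\xi_\alpha A_{ij})$. For $a,b\in\mathbb{R}^N$, $a\vee b:=\frac12(a\otimes b+b\otimes a)$; matrix inequalities in the sense of quadratic forms. Contact jets: $J^{1,\xi}u(x)$ is the set of $P$ for which there is a continuous $T:\mathbb{R}^n\setminus\{0\}\to\mathbb{R}^{N\times N}_s$ with $|T(y)|\to0$ as $y\to0$ and $\xi\vee[u(z)-u(x)-P(z-x)]\le|z-x|T(z-x)$ for $z\ne x$ near $x$; $J^{2,\xi}u(x)$ is the set of $(P,\mathbf{X})$ with such a $T$ and $\xi\vee[u(z)-u(x)-P(z-x)-\frac12\mathbf{X}:(z-x)\otimes(z-x)]\le|z-x|^2T(z-x)$ for $z\ne x$ near $x$. *)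

theory Defs
  imports "HOL-Analysis.Analysis"
begin

text \<open>Vectors in R^n: real^'n; maps R^n -> R^N: real^'n => real^'m;
  P in R^{N x n}: real^'n^'m (so P *v y in R^N);
  X in R^N (x) R^{n x n}_s: real^'n^'n^'m with X$a$i$j = X$a$j$i.\<close>

definition sym_tensor :: "real^'n^'n^'m \<Rightarrow> bool" where
  "sym_tensor X \<longleftrightarrow> (\<forall>a i j. X$a$i$j = X$a$j$i)"

definition tensor_quad :: "real^'n^'n^'m \<Rightarrow> real^'n \<Rightarrow> real^'m" where
  "tensor_quad X z = (\<chi> a. \<Sum>i\<in>UNIV. \<Sum>j\<in>UNIV. X$a$i$j * z$i * z$j)"

definition vec_tensor :: "real^'m \<Rightarrow> real^'n^'n \<Rightarrow> real^'n^'n^'m" where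
  "vec_tensor \<xi> A = (\<chi> a i j. \<xi>$a * A$i$j)"

definition vee :: "real^'m \<Rightarrow> real^'m \<Rightarrow> real^'m^'m" where
  "vee a b = (\<chi> i j. (a$i * b$j + b$i * a$j) / 2)"

definition mat_le :: "real^'m^'m \<Rightarrow> real^'m^'m \<Rightarrow> bool" where
  "mat_le A B \<longleftrightarrow> (\<forall>w. w \<bullet> (A *v w) \<le> w \<bullet> (B *v w))"

definition psd :: "real^'n^'n \<Rightarrow> bool" where
  "psd A \<longleftrightarrow> transpose A = A \<and> (\<forall>z. 0 \<le> z \<bullet> (A *v z))"

definition admissible_T :: "(real^'n \<Rightarrow> real^'m^'m) \<Rightarrow> bool" where
  "admissible_T T \<longleftrightarrow> continuous_on (UNIV - {0}) T
     \<and> (\<forall>y. y \<noteq> 0 \<longrightarrow> transpose (T y) = T y)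
     \<and> (T \<longlongrightarrow> 0) (at 0)"

definition J1 :: "(real^'n) set \<Rightarrow> (real^'n \<Rightarrow> real^'m) \<Rightarrow> real^'m \<Rightarrow> real^'n
                   \<Rightarrow> (real^'n^'m) set" where
  "J1 \<Omega> u \<xi> x = {P. \<exists>T. admissible_T T \<and>
     (\<exists>\<delta>>0. \<forall>z\<in>\<Omega>. z \<noteq> x \<and> dist z x < \<delta> \<longrightarrow>
        mat_le (vee \<xi> (u z - u x - P *v (z - x))) (norm (z - x) *\<^sub>R T (z - x)))}"

definition J2 :: "(real^'n) set \<Rightarrow> (real^'n \<Rightarrow> real^'m) \<Rightarrow> real^'m \<Rightarrow> real^'n
                   \<Rightarrow> ((real^'n^'m) \<times> (real^'n^'n^'m)) set" where
  "J2 \<Omega> u \<xi> x = {(P, X). sym_tensor X \<and> (\<exists>T. admissible_T T \<and>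
     (\<exists>\<delta>>0. \<forall>z\<in>\<Omega>. z \<noteq> x \<and> dist z x < \<delta> \<longrightarrow>
        mat_le (vee \<xi> (u z - u x - P *v (z - x) - (1/2) *\<^sub>R tensor_quad X (z - x)))
               ((norm (z - x))\<^sup>2 *\<^sub>R T (z - x))))}"

end

theory Submission
  imports Defs
begin
lemma qf_vee: "w \<bullet> (vee a b *v w) = (a \<bullet> w) * (b \<bullet> w)"
proof -
  have 1: "w \<bullet> (vee a b *v w) = (\<Sum>i\<in>UNIV. \<Sum>j\<in>UNIV. (a$i*w$i)*(b$j*w$j)/2 + (b$i*w$i)*(a$j*w$j)/2)"
    by (simp add: inner_vec_def matrix_vector_mult_def vee_def sum_distrib_left algebra_simps add_divide_distrib)
  have 2: "\<dots> = (\<Sum>i\<in>UNIV. \<Sum>j\<in>UNIV. (a$i*w$i)*(b$j*w$j)/2) + (\<Sum>i\<in>UNIV. \<Sum>j\<in>UNIV. (b$i*w$i)*(a$j*w$j)/2)"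
    by (simp add: sum.distrib)
  have 3: "(\<Sum>i\<in>UNIV. \<Sum>j\<in>UNIV. (b$i*w$i)*(a$j*w$j)/2) = (\<Sum>i\<in>UNIV. \<Sum>j\<in>UNIV. (a$i*w$i)*(b$j*w$j)/2)"
    by (rule trans[OF sum.swap[of "\<lambda>i j. (b$i*w$i)*(a$j*w$j)/2"]]) (simp add: mult_ac)
  have 4: "(\<Sum>i\<in>UNIV. \<Sum>j\<in>UNIV. (a$i*w$i)*(b$j*w$j)/2) = (a \<bullet> w) * (b \<bullet> w) / 2"
    unfolding inner_vec_def inner_real_def sum_product by (simp add: sum_divide_distrib mult_ac)
  show ?thesis using 1 2 3 4 by linarith
qed

definition msum :: "real^'n^'m \<Rightarrow> real" where
  "msum A = (\<Sum>i\<in>UNIV. \<Sum>j\<in>UNIV. \<bar>A $ i $ j\<bar>)"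

lemma mv_bound: "norm (A *v x) \<le> msum A * norm x"
proof -
  have "norm (A *v x) \<le> (\<Sum>i\<in>UNIV. \<bar>(A *v x) $ i\<bar>)"
    by (rule norm_le_l1_cart)
  also have "\<dots> \<le> (\<Sum>i\<in>UNIV. \<Sum>j\<in>UNIV. \<bar>A $ i $ j\<bar> * norm x)"
  proof (rule sum_mono)
    fix i
    have "\<bar>(A *v x) $ i\<bar> \<le> \<bar>\<Sum>j\<in>UNIV. A $ i $ j * x $ j\<bar>"
      by (simp add: matrix_vector_mult_def)
    also have "\<dots> \<le> (\<Sum>j\<in>UNIV. \<bar>A $ i $ j * x $ j\<bar>)"
      by (rule sum_abs)
    also have "\<dots> \<le> (\<Sum>j\<in>UNIV. \<bar>A $ i $ j\<bar> * norm x)"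
      by (rule sum_mono) (simp add: abs_mult component_le_norm_cart mult_left_mono)
    finally show "\<bar>(A *v x) $ i\<bar> \<le> (\<Sum>j\<in>UNIV. \<bar>A $ i $ j\<bar> * norm x)" .
  qed
  finally show ?thesis by (simp add: sum_distrib_right msum_def)
qed

lemma msum_le: "msum (A::real^'n^'m) \<le> real CARD('m) * real CARD('n) * norm A"
proof -
  have "msum A \<le> (\<Sum>i::'m\<in>UNIV. \<Sum>j::'n\<in>UNIV. norm A)"
    unfolding msum_def
    by (intro sum_mono) (meson component_le_norm_cart Finite_Cartesian_Product.norm_nth_le order_trans)
  then show ?thesis by simp
qed

lemma msum_tendsto: fixes T :: "'a \<Rightarrow> real^'n::finite^'m::finite"
  assumes that: "(T \<longlongrightarrow> 0) F"
  shows "((\<lambda>y. msum (T y)) \<longlongrightarrow> 0) F"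
proof -
  have *: "((\<lambda>y. T y $ i $ j) \<longlongrightarrow> 0 $ i $ j) F" for i j
    by (intro tendsto_vec_nth that)
  have "((\<lambda>y. msum (T y)) \<longlongrightarrow> msum (0::real^'n^'m)) F"
    unfolding msum_def apply (rule tendsto_sum) apply (rule tendsto_sum) apply (rule tendsto_rabs) by (rule *)
  then show ?thesis by (simp add: msum_def)
qed

lemma qf_bound: "\<bar>w \<bullet> (A *v w)\<bar> \<le> msum A * (w \<bullet> w)"
proof -
  have "\<bar>w \<bullet> (A *v w)\<bar> \<le> norm w * norm (A *v w)" by (rule Cauchy_Schwarz_ineq2)
  also have "\<dots> \<le> norm w * (msum A * norm w)" by (simp add: mult_left_mono mv_bound)
  finally show ?thesis by (simp add: algebra_simps dot_square_norm power2_eq_square)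
qed

lemma pert: "norm \<xi> = 1 \<Longrightarrow> (\<xi> \<bullet> w) * (v \<bullet> w) \<le> norm v * (w \<bullet> w)"
proof -
  assume n: "norm \<xi> = 1"
  have "(\<xi> \<bullet> w) * (v \<bullet> w) \<le> \<bar>\<xi> \<bullet> w\<bar> * \<bar>v \<bullet> w\<bar>" by (simp add: abs_mult[symmetric])
  also have "\<dots> \<le> norm w * (norm v * norm w)"
    using Cauchy_Schwarz_ineq2[of \<xi> w] Cauchy_Schwarz_ineq2[of v w] n
    by (intro mult_mono) auto
  finally show ?thesis by (simp add: algebra_simps dot_square_norm power2_eq_square)
qed

lemma tq_lin: "tensor_quad (a *\<^sub>R X + b *\<^sub>R Y) z = a *\<^sub>R tensor_quad X z + b *\<^sub>R tensor_quad Y z"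
  by (simp add: vec_eq_iff tensor_quad_def algebra_simps sum.distrib sum_distrib_left)

lemma tq_diff: "tensor_quad X z - tensor_quad Y z = tensor_quad (X - Y) z"
  by (simp add: vec_eq_iff tensor_quad_def algebra_simps sum_subtractf)

lemma tq_psd: "tensor_quad (X + vec_tensor \<xi> A) z = tensor_quad X z + (z \<bullet> (A *v z)) *\<^sub>R \<xi>"
  by (simp add: vec_eq_iff tensor_quad_def vec_tensor_def algebra_simps sum.distrib sum_distrib_left
      inner_vec_def matrix_vector_mult_def)

lemma tq_bound: "norm (tensor_quad (D::real^'n^'n^'m) z) \<le> real CARD('m) * (real CARD('n) * real CARD('n) * norm D) * (norm z)^2"
proof -
  have "norm (tensor_quad D z) \<le> (\<Sum>a\<in>UNIV. \<bar>tensor_quad D z $ a\<bar>)" by (rule norm_le_l1_cart)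
  also have "\<dots> \<le> (\<Sum>a::'m\<in>UNIV. real CARD('n) * real CARD('n) * norm D * (norm z)^2)"
  proof (rule sum_mono)
    fix a
    have "tensor_quad D z $ a = z \<bullet> ((D$a) *v z)"
      by (simp add: tensor_quad_def inner_vec_def matrix_vector_mult_def sum_distrib_left algebra_simps)
    then have "\<bar>tensor_quad D z $ a\<bar> \<le> msum (D$a) * (z \<bullet> z)" using qf_bound by simp
    also have "\<dots> \<le> (real CARD('n) * real CARD('n) * norm D) * (z \<bullet> z)"
      using msum_le[of "D$a"] Finite_Cartesian_Product.norm_nth_le[of D a]
      by (intro mult_right_mono) (auto intro: order_trans mult_left_mono)
    finally show "\<bar>tensor_quad D z $ a\<bar> \<le> real CARD('n) * real CARD('n) * norm D * (norm z)^2"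
      by (simp add: dot_square_norm)
  qed
  finally show ?thesis by simp
qed

lemma majorant:
  fixes Q :: "real \<Rightarrow> 'a::real_normed_vector \<Rightarrow> bool"
  assumes mono: "\<And>e e' y. Q e y \<Longrightarrow> e \<le> e' \<Longrightarrow> Q e' y"
    and ev: "\<And>e. e > 0 \<Longrightarrow> \<exists>\<delta>>0. \<forall>y. 0 < norm y \<and> norm y < \<delta> \<longrightarrow> Q e y"
  shows "\<exists>h. continuous_on UNIV h \<and> h 0 = 0 \<and> (\<exists>\<delta>>0. \<forall>y. 0 < norm y \<and> norm y < \<delta> \<longrightarrow> Q (h y) y)"
proof -
  have "\<forall>k::nat. \<exists>\<delta>>0. \<forall>y. 0 < norm y \<and> norm y < \<delta> \<longrightarrow> Q ((1/2)^k) y"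
    using ev by simp
  then obtain D where Dpos: "\<And>k. D k > 0"
    and DQ: "\<And>k y. 0 < norm y \<Longrightarrow> norm y < D k \<Longrightarrow> Q ((1/2)^k) y"
    by metis
  define d where "d = rec_nat (min (D 1) 1) (\<lambda>k dk. min (D (Suc (Suc k))) (dk/2))"
  have d0: "d 0 = min (D 1) 1" by (simp add: d_def)
  have dS: "d (Suc k) = min (D (Suc (Suc k))) (d k / 2)" for k by (simp add: d_def)
  have dpos: "d k > 0" for k
    by (induction k) (auto simp: d0 dS Dpos)
  have dle: "d k \<le> D (Suc k)" for k
    by (cases k) (auto simp: d0 dS)
  have dlt: "d (Suc k) < d k" for k
    using dpos[of k] by (simp add: dS)
  have dsmall: "d k \<le> (1/2)^k" for k
    by (induction k) (auto simp: d0 dS intro: min.coboundedI2)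
  define g where "g k t = min 1 (max 0 ((t - d (Suc k)) / (d k - d (Suc k))))" for k t
  define H where "H t = (\<Sum>k. (1/2)^k * g k t)" for t
  have g01: "0 \<le> g k t" "g k t \<le> 1" for k t by (auto simp: g_def)
  have nb: "norm ((1/2::real)^k * g k t) \<le> (1/2)^k" for k t
    using g01[of k t] by (simp add: abs_mult)
  have summ: "summable (\<lambda>k. (1/2::real)^k)" by (rule summable_geometric) simp
  have summ2: "summable (\<lambda>k. (1/2::real)^k * g k t)" for t
    by (rule summable_comparison_test[OF _ summ]) (use nb in auto)
  have ul: "uniform_limit UNIV (\<lambda>n t. \<Sum>k<n. (1/2)^k * g k t) H sequentially"
    unfolding H_def by (rule Weierstrass_m_test[OF _ summ]) (rule nb)
  have gc: "continuous_on UNIV (g k)" for k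
  proof -
    have "d k - d (Suc k) \<noteq> 0" using dlt[of k] by simp
    then show ?thesis unfolding g_def by (intro continuous_intros) auto
  qed
  have Hc: "continuous_on UNIV H"
    by (rule uniform_limit_theorem[OF _ ul]) (auto intro!: continuous_intros gc always_eventually)
  have H0: "H 0 = 0"
  proof -
    have "g k 0 = 0" for k
      using dpos[of "Suc k"] dlt[of k] unfolding g_def
      by (simp add: divide_neg_pos)
    then show ?thesis by (simp add: H_def)
  qed
  define h where "h y = H (norm y)" for y :: 'a
  have hc: "continuous_on UNIV h"
    unfolding h_def by (rule continuous_on_compose2[OF Hc continuous_on_norm_id]) auto
  have "\<forall>y. 0 < norm y \<and> norm y < d 0 \<longrightarrow> Q (h y) y"
  proof (intro allI impI)
    fix y :: 'a assume y: "0 < norm y \<and> norm y < d 0"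
    define t where "t = norm y"
    obtain n where n: "(1/2::real)^n < t"
      using real_arch_pow_inv[of t "1/2"] y t_def by auto
    have ex: "\<exists>j. d j \<le> t" using dsmall[of n] n by (intro exI[of _ n]) simp
    define j where "j = (LEAST j. d j \<le> t)"
    have dj: "d j \<le> t" unfolding j_def by (rule LeastI_ex[OF ex])
    have j0: "j \<noteq> 0"
    proof
      assume "j = 0"
      then have "d 0 \<le> t" using dj by simp
      then show False using y t_def by linarith
    qed
    then obtain i where ji: "j = Suc i" using not0_implies_Suc by blast
    have "\<not> d i \<le> t" using not_less_Least[of i "\<lambda>j. d j \<le> t"] ji j_def by simp
    then have ti: "t < d i" by simp
    have "g j t = 1"
    proof -
      have "1 \<le> (t - d (Suc j)) / (d j - d (Suc j))"
        using dj dlt[of j] by simp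
      then show ?thesis unfolding g_def by simp
    qed
    have Hj: "(1/2)^j \<le> H t"
    proof -
      have "sum (\<lambda>k. (1/2::real)^k * g k t) {j} \<le> (\<Sum>k. (1/2)^k * g k t)"
        by (rule sum_le_suminf[OF summ2]) (use g01 in auto)
      then show ?thesis using \<open>g j t = 1\<close> by (simp add: H_def)
    qed
    have Qj: "Q ((1/2)^j) y"
      using DQ[of y j] y dle[of i] ti ji t_def by simp
    have "h y = H t" by (simp add: h_def t_def)
    then show "Q (h y) y" using mono[OF Qj Hj] by simp
  qed
  then show ?thesis using hc H0 dpos[of 0] h_def by (intro exI[of _ h]) auto
qed


lemma transpose_smat: "transpose (c *\<^sub>R (mat 1 :: real^'n^'n)) = c *\<^sub>R mat 1"
  by (simp add: vec_eq_iff transpose_def mat_def)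

lemma mult3_mono: "(e::real) \<le> e' \<Longrightarrow> 0 \<le> a \<Longrightarrow> 0 \<le> b \<Longrightarrow> e * a * b \<le> e' * a * b"
  by (intro mult_right_mono) auto

lemma char:
  fixes R :: "real^'n \<Rightarrow> real^'m" and \<xi> :: "real^'m" and x :: "real^'n"
  shows "(\<exists>T. admissible_T T \<and> (\<exists>\<delta>>0. \<forall>z\<in>\<Omega>. z \<noteq> x \<and> dist z x < \<delta> \<longrightarrow>
            mat_le (vee \<xi> (R z)) ((norm (z - x))^k *\<^sub>R T (z - x))))
    \<longleftrightarrow> (\<forall>\<epsilon>>0. \<exists>\<delta>>0. \<forall>z\<in>\<Omega>. z \<noteq> x \<and> dist z x < \<delta> \<longrightarrow>
            (\<forall>w. (\<xi> \<bullet> w) * (R z \<bullet> w) \<le> \<epsilon> * norm (z - x)^k * (w \<bullet> w)))"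
proof
  assume "\<exists>T. admissible_T T \<and> (\<exists>\<delta>>0. \<forall>z\<in>\<Omega>. z \<noteq> x \<and> dist z x < \<delta> \<longrightarrow>
            mat_le (vee \<xi> (R z)) ((norm (z - x))^k *\<^sub>R T (z - x)))"
  then obtain T \<delta> where T: "admissible_T T" and \<delta>: "\<delta> > 0"
    and H: "\<forall>z\<in>\<Omega>. z \<noteq> x \<and> dist z x < \<delta> \<longrightarrow> mat_le (vee \<xi> (R z)) ((norm (z - x))^k *\<^sub>R T (z - x))"
    by blast
  show "\<forall>\<epsilon>>0. \<exists>\<delta>>0. \<forall>z\<in>\<Omega>. z \<noteq> x \<and> dist z x < \<delta> \<longrightarrow>
            (\<forall>w. (\<xi> \<bullet> w) * (R z \<bullet> w) \<le> \<epsilon> * norm (z - x)^k * (w \<bullet> w))"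
  proof (intro allI impI)
    fix \<epsilon> :: real assume \<epsilon>: "\<epsilon> > 0"
    have "(T \<longlongrightarrow> 0) (at 0)" using T by (simp add: admissible_T_def)
    then have "((\<lambda>y. msum (T y)) \<longlongrightarrow> 0) (at 0)" by (rule msum_tendsto)
    then have "eventually (\<lambda>y. msum (T y) < \<epsilon>) (at 0)" using \<epsilon> by (rule order_tendstoD)
    then obtain d where d: "d > 0" "\<And>y. y \<noteq> 0 \<Longrightarrow> dist y 0 < d \<Longrightarrow> msum (T y) < \<epsilon>"
      by (auto simp: eventually_at)
    show "\<exists>\<delta>>0. \<forall>z\<in>\<Omega>. z \<noteq> x \<and> dist z x < \<delta> \<longrightarrow>
            (\<forall>w. (\<xi> \<bullet> w) * (R z \<bullet> w) \<le> \<epsilon> * norm (z - x)^k * (w \<bullet> w))"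
    proof (intro exI[of _ "min \<delta> d"] conjI ballI allI impI)
      show "min \<delta> d > 0" using \<delta> d by simp
      fix z w assume z: "z \<in> \<Omega>" "z \<noteq> x \<and> dist z x < min \<delta> d"
      have ml: "mat_le (vee \<xi> (R z)) ((norm (z - x))^k *\<^sub>R T (z - x))" using H z by auto
      have ms: "msum (T (z - x)) < \<epsilon>"
        using d(2)[of "z - x"] z by (simp add: dist_norm)
      have "(\<xi> \<bullet> w) * (R z \<bullet> w) = w \<bullet> (vee \<xi> (R z) *v w)" by (simp add: qf_vee)
      also have "\<dots> \<le> w \<bullet> (((norm (z - x))^k *\<^sub>R T (z - x)) *v w)" using ml mat_le_def by blast
      also have "\<dots> = (norm (z - x))^k * (w \<bullet> (T (z - x) *v w))"
        by (simp add: scaleR_matrix_vector_assoc[symmetric])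
      also have "\<dots> \<le> (norm (z - x))^k * (msum (T (z - x)) * (w \<bullet> w))"
        using qf_bound[of w "T (z - x)"] by (intro mult_left_mono) auto
      also have "\<dots> \<le> (norm (z - x))^k * (\<epsilon> * (w \<bullet> w))"
        using ms by (intro mult_left_mono mult_right_mono) auto
      finally show "(\<xi> \<bullet> w) * (R z \<bullet> w) \<le> \<epsilon> * norm (z - x)^k * (w \<bullet> w)" by (simp add: mult_ac)
    qed
  qed
next
  assume E: "\<forall>\<epsilon>>0. \<exists>\<delta>>0. \<forall>z\<in>\<Omega>. z \<noteq> x \<and> dist z x < \<delta> \<longrightarrow>
            (\<forall>w. (\<xi> \<bullet> w) * (R z \<bullet> w) \<le> \<epsilon> * norm (z - x)^k * (w \<bullet> w))"
  define Q where "Q e y = (x + y \<in> \<Omega> \<longrightarrow> (\<forall>w. (\<xi> \<bullet> w) * (R (x + y) \<bullet> w) \<le> e * norm y ^ k * (w \<bullet> w)))"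
    for e and y :: "real^'n"
  have mono: "Q e' y" if "Q e y" "e \<le> e'" for e e' y
    unfolding Q_def
  proof (intro impI allI)
    fix w assume "x + y \<in> \<Omega>"
    then have "(\<xi> \<bullet> w) * (R (x + y) \<bullet> w) \<le> e * norm y ^ k * (w \<bullet> w)" using that(1) Q_def by blast
    also have "\<dots> \<le> e' * norm y ^ k * (w \<bullet> w)" by (rule mult3_mono) (use that in auto)
    finally show "(\<xi> \<bullet> w) * (R (x + y) \<bullet> w) \<le> e' * norm y ^ k * (w \<bullet> w)" .
  qed
  have ev: "\<exists>\<delta>>0. \<forall>y. 0 < norm y \<and> norm y < \<delta> \<longrightarrow> Q e y" if epos: "e > 0" for e
  proof -
    obtain \<delta> where \<delta>: "\<delta> > 0" and H: "\<forall>z\<in>\<Omega>. z \<noteq> x \<and> dist z x < \<delta> \<longrightarrow>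
            (\<forall>w. (\<xi> \<bullet> w) * (R z \<bullet> w) \<le> e * norm (z - x)^k * (w \<bullet> w))"
      using E epos by blast
    show ?thesis
    proof (intro exI[of _ \<delta>] conjI allI impI)
      fix y :: "real^'n" assume y: "0 < norm y \<and> norm y < \<delta>"
      show "Q e y" unfolding Q_def
      proof (intro impI allI)
        fix w assume "x + y \<in> \<Omega>"
        moreover have "x + y \<noteq> x" "dist (x + y) x < \<delta>" using y by (auto simp: dist_norm)
        ultimately show "(\<xi> \<bullet> w) * (R (x + y) \<bullet> w) \<le> e * norm y ^ k * (w \<bullet> w)"
          using H by force
      qed
    qed (use \<delta> in auto)
  qed
  obtain h \<delta> where hc: "continuous_on UNIV h" and h0: "h 0 = 0" and \<delta>: "\<delta> > 0"
    and hQ: "\<And>y. 0 < norm y \<Longrightarrow> norm y < \<delta> \<Longrightarrow> Q (h y) y"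
  proof -
    have "\<exists>h. continuous_on UNIV h \<and> h 0 = 0 \<and> (\<exists>\<delta>>0. \<forall>y. 0 < norm y \<and> norm y < \<delta> \<longrightarrow> Q (h y) y)"
      apply (rule majorant[of Q])
       apply (erule mono, assumption)
      apply (erule ev)
      done
    then show ?thesis using that by blast
  qed
  define T where "T y = h y *\<^sub>R (mat 1 :: real^'m^'m)" for y :: "real^'n"
  have adm: "admissible_T T"
    unfolding admissible_T_def
  proof (intro conjI allI impI)
    show "continuous_on (UNIV - {0}) T" unfolding T_def
      by (intro continuous_on_scaleR continuous_on_const continuous_on_subset[OF hc]) auto
    show "transpose (T y) = T y" for y by (simp add: T_def transpose_smat)
    have "isCont h 0" using hc by (simp add: continuous_on_eq_continuous_at)
    then have "(h \<longlongrightarrow> 0) (at 0)" using h0 by (simp add: isCont_def)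
    then have "((\<lambda>y. h y *\<^sub>R (mat 1 :: real^'m^'m)) \<longlongrightarrow> 0 *\<^sub>R mat 1) (at 0)"
      by (intro tendsto_scaleR tendsto_const)
    moreover have "T = (\<lambda>y. h y *\<^sub>R (mat 1 :: real^'m^'m))" by (rule ext) (simp add: T_def)
    ultimately show "(T \<longlongrightarrow> 0) (at 0)" by simp
  qed
  show "\<exists>T. admissible_T T \<and> (\<exists>\<delta>>0. \<forall>z\<in>\<Omega>. z \<noteq> x \<and> dist z x < \<delta> \<longrightarrow>
            mat_le (vee \<xi> (R z)) ((norm (z - x))^k *\<^sub>R T (z - x)))"
  proof (intro exI[of _ T] conjI exI[of _ \<delta>] ballI impI)
    show "admissible_T T" by (rule adm)
    show "\<delta> > 0" by (rule \<delta>)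
    fix z assume z: "z \<in> \<Omega>" "z \<noteq> x \<and> dist z x < \<delta>"
    have q: "Q (h (z - x)) (z - x)" using hQ[of "z - x"] z by (simp add: dist_norm)
    show "mat_le (vee \<xi> (R z)) ((norm (z - x))^k *\<^sub>R T (z - x))"
      unfolding mat_le_def
    proof
      fix w
      have "w \<bullet> (vee \<xi> (R z) *v w) = (\<xi> \<bullet> w) * (R z \<bullet> w)" by (simp add: qf_vee)
      also have "\<dots> \<le> h (z - x) * norm (z - x) ^ k * (w \<bullet> w)" using q z by (simp add: Q_def)
      also have "\<dots> = w \<bullet> (((norm (z - x))^k *\<^sub>R T (z - x)) *v w)"
        by (simp add: T_def scaleR_matrix_vector_assoc[symmetric])
      finally show "w \<bullet> (vee \<xi> (R z) *v w) \<le> w \<bullet> (((norm (z - x))^k *\<^sub>R T (z - x)) *v w)" .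
    qed
  qed
qed


definition good1 :: "(real^'n) set \<Rightarrow> (real^'n \<Rightarrow> real^'m) \<Rightarrow> real^'m \<Rightarrow> real^'n \<Rightarrow> real^'n^'m \<Rightarrow> real \<Rightarrow> bool" where
  "good1 \<Omega> u \<xi> x P \<epsilon> \<longleftrightarrow> (\<exists>\<delta>>0. \<forall>z\<in>\<Omega>. z \<noteq> x \<and> dist z x < \<delta> \<longrightarrow>
     (\<forall>w. (\<xi> \<bullet> w) * ((u z - u x - P *v (z - x)) \<bullet> w) \<le> \<epsilon> * norm (z - x) * (w \<bullet> w)))"

definition good2 :: "(real^'n) set \<Rightarrow> (real^'n \<Rightarrow> real^'m) \<Rightarrow> real^'m \<Rightarrow> real^'n \<Rightarrow> real^'n^'m \<Rightarrow> real^'n^'n^'m \<Rightarrow> real \<Rightarrow> bool" where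
  "good2 \<Omega> u \<xi> x P X \<epsilon> \<longleftrightarrow> (\<exists>\<delta>>0. \<forall>z\<in>\<Omega>. z \<noteq> x \<and> dist z x < \<delta> \<longrightarrow>
     (\<forall>w. (\<xi> \<bullet> w) * ((u z - u x - P *v (z - x) - (1/2) *\<^sub>R tensor_quad X (z - x)) \<bullet> w)
        \<le> \<epsilon> * norm (z - x)^2 * (w \<bullet> w)))"

lemma J1_char: "P \<in> J1 \<Omega> u \<xi> x \<longleftrightarrow> (\<forall>\<epsilon>>0. good1 \<Omega> u \<xi> x P \<epsilon>)"
  unfolding J1_def good1_def mem_Collect_eq
  using char[where R="\<lambda>z. u z - u x - P *v (z - x)" and k=1] by simp

lemma J2_char: "(P, X) \<in> J2 \<Omega> u \<xi> x \<longleftrightarrow> sym_tensor X \<and> (\<forall>\<epsilon>>0. good2 \<Omega> u \<xi> x P X \<epsilon>)"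
  unfolding J2_def good2_def mem_Collect_eq prod.case
  using char[where R="\<lambda>z. u z - u x - P *v (z - x) - (1/2) *\<^sub>R tensor_quad X (z - x)" and k=2] by simp

lemma comb_le: "(A1::real) \<le> c \<Longrightarrow> A2 \<le> c \<Longrightarrow> 0 \<le> a \<Longrightarrow> 0 \<le> b \<Longrightarrow> a + b = 1 \<Longrightarrow> a * A1 + b * A2 \<le> c"
proof -
  assume h: "A1 \<le> c" "A2 \<le> c" "0 \<le> a" "0 \<le> b" "a + b = 1"
  have "a * A1 \<le> a * c" "b * A2 \<le> b * c" using h by (auto intro: mult_left_mono)
  then have "a * A1 + b * A2 \<le> (a + b) * c" by (simp add: algebra_simps)
  then show ?thesis using h by simp
qed

lemma good1_conv:
  assumes "good1 \<Omega> u \<xi> x P1 \<epsilon>" "good1 \<Omega> u \<xi> x P2 \<epsilon>" "0 \<le> a" "0 \<le> b" "a + b = 1"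
  shows "good1 \<Omega> u \<xi> x (a *\<^sub>R P1 + b *\<^sub>R P2) \<epsilon>"
proof -
  obtain d1 where d1: "d1 > 0" "\<forall>z\<in>\<Omega>. z \<noteq> x \<and> dist z x < d1 \<longrightarrow>
     (\<forall>w. (\<xi> \<bullet> w) * ((u z - u x - P1 *v (z - x)) \<bullet> w) \<le> \<epsilon> * norm (z - x) * (w \<bullet> w))"
    using assms(1) good1_def by blast
  obtain d2 where d2: "d2 > 0" "\<forall>z\<in>\<Omega>. z \<noteq> x \<and> dist z x < d2 \<longrightarrow>
     (\<forall>w. (\<xi> \<bullet> w) * ((u z - u x - P2 *v (z - x)) \<bullet> w) \<le> \<epsilon> * norm (z - x) * (w \<bullet> w))"
    using assms(2) good1_def by blast
  show ?thesis unfolding good1_def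
  proof (intro exI[of _ "min d1 d2"] conjI ballI impI allI)
    show "min d1 d2 > 0" using d1 d2 by simp
    fix z w assume z: "z \<in> \<Omega>" "z \<noteq> x \<and> dist z x < min d1 d2"
    have b: "b = 1 - a" using assms by simp
    have eq: "u z - u x - (a *\<^sub>R P1 + b *\<^sub>R P2) *v (z - x)
       = a *\<^sub>R (u z - u x - P1 *v (z - x)) + b *\<^sub>R (u z - u x - P2 *v (z - x))"
      unfolding b by (simp add: algebra_simps matrix_vector_mult_add_rdistrib scaleR_matrix_vector_assoc[symmetric])
    have "(\<xi> \<bullet> w) * ((u z - u x - (a *\<^sub>R P1 + b *\<^sub>R P2) *v (z - x)) \<bullet> w)
       = a * ((\<xi> \<bullet> w) * ((u z - u x - P1 *v (z - x)) \<bullet> w)) + b * ((\<xi> \<bullet> w) * ((u z - u x - P2 *v (z - x)) \<bullet> w))"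
      unfolding eq by (simp add: inner_add_left algebra_simps)
    also have "\<dots> \<le> \<epsilon> * norm (z - x) * (w \<bullet> w)"
      using d1(2) d2(2) z assms(3-5) by (intro comb_le) auto
    finally show "(\<xi> \<bullet> w) * ((u z - u x - (a *\<^sub>R P1 + b *\<^sub>R P2) *v (z - x)) \<bullet> w) \<le> \<epsilon> * norm (z - x) * (w \<bullet> w)" .
  qed
qed

lemma good2_conv:
  assumes "good2 \<Omega> u \<xi> x P1 X1 \<epsilon>" "good2 \<Omega> u \<xi> x P2 X2 \<epsilon>" "0 \<le> a" "0 \<le> b" "a + b = 1"
  shows "good2 \<Omega> u \<xi> x (a *\<^sub>R P1 + b *\<^sub>R P2) (a *\<^sub>R X1 + b *\<^sub>R X2) \<epsilon>"
proof -
  obtain d1 where d1: "d1 > 0" "\<forall>z\<in>\<Omega>. z \<noteq> x \<and> dist z x < d1 \<longrightarrow>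
     (\<forall>w. (\<xi> \<bullet> w) * ((u z - u x - P1 *v (z - x) - (1/2) *\<^sub>R tensor_quad X1 (z - x)) \<bullet> w) \<le> \<epsilon> * norm (z - x)^2 * (w \<bullet> w))"
    using assms(1) good2_def by blast
  obtain d2 where d2: "d2 > 0" "\<forall>z\<in>\<Omega>. z \<noteq> x \<and> dist z x < d2 \<longrightarrow>
     (\<forall>w. (\<xi> \<bullet> w) * ((u z - u x - P2 *v (z - x) - (1/2) *\<^sub>R tensor_quad X2 (z - x)) \<bullet> w) \<le> \<epsilon> * norm (z - x)^2 * (w \<bullet> w))"
    using assms(2) good2_def by blast
  show ?thesis unfolding good2_def
  proof (intro exI[of _ "min d1 d2"] conjI ballI impI allI)
    show "min d1 d2 > 0" using d1 d2 by simp
    fix z w assume z: "z \<in> \<Omega>" "z \<noteq> x \<and> dist z x < min d1 d2"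
    have b: "b = 1 - a" using assms by simp
    have eq: "u z - u x - (a *\<^sub>R P1 + b *\<^sub>R P2) *v (z - x) - (1/2) *\<^sub>R tensor_quad (a *\<^sub>R X1 + b *\<^sub>R X2) (z - x)
       = a *\<^sub>R (u z - u x - P1 *v (z - x) - (1/2) *\<^sub>R tensor_quad X1 (z - x))
         + b *\<^sub>R (u z - u x - P2 *v (z - x) - (1/2) *\<^sub>R tensor_quad X2 (z - x))"
      unfolding tq_lin unfolding b
      apply (simp add: algebra_simps matrix_vector_mult_add_rdistrib scaleR_matrix_vector_assoc[symmetric])
      by (simp add: scaleR_left_distrib[symmetric] add_divide_distrib[symmetric])
    have "(\<xi> \<bullet> w) * ((u z - u x - (a *\<^sub>R P1 + b *\<^sub>R P2) *v (z - x) - (1/2) *\<^sub>R tensor_quad (a *\<^sub>R X1 + b *\<^sub>R X2) (z - x)) \<bullet> w)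
       = a * ((\<xi> \<bullet> w) * ((u z - u x - P1 *v (z - x) - (1/2) *\<^sub>R tensor_quad X1 (z - x)) \<bullet> w))
         + b * ((\<xi> \<bullet> w) * ((u z - u x - P2 *v (z - x) - (1/2) *\<^sub>R tensor_quad X2 (z - x)) \<bullet> w))"
      unfolding eq by (simp add: inner_add_left algebra_simps)
    also have "\<dots> \<le> \<epsilon> * norm (z - x)^2 * (w \<bullet> w)"
      using d1(2) d2(2) z assms(3-5) by (intro comb_le) auto
    finally show "(\<xi> \<bullet> w) * ((u z - u x - (a *\<^sub>R P1 + b *\<^sub>R P2) *v (z - x) - (1/2) *\<^sub>R tensor_quad (a *\<^sub>R X1 + b *\<^sub>R X2) (z - x)) \<bullet> w) \<le> \<epsilon> * norm (z - x)^2 * (w \<bullet> w)" .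
  qed
qed


lemma J1_closed:
  fixes u :: "real^'n \<Rightarrow> real^'m" and \<xi> :: "real^'m"
  assumes xi: "norm \<xi> = 1"
  shows "closed (J1 \<Omega> u \<xi> x)"
proof -
  have "closure (J1 \<Omega> u \<xi> x) \<subseteq> J1 \<Omega> u \<xi> x"
  proof
    fix P assume "P \<in> closure (J1 \<Omega> u \<xi> x)"
    then have ap: "\<forall>e>0. \<exists>P'\<in>J1 \<Omega> u \<xi> x. dist P' P < e" by (simp add: closure_approachable)
    show "P \<in> J1 \<Omega> u \<xi> x" unfolding J1_char
    proof (intro allI impI)
      fix \<epsilon> :: real assume \<epsilon>: "\<epsilon> > 0"
      define C where "C = real CARD('m) * real CARD('n)"
      have C: "C > 0" by (simp add: C_def)
      have "\<epsilon> / (2 * C) > 0" using \<epsilon> C by simp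
      then obtain P' where P': "P' \<in> J1 \<Omega> u \<xi> x" "dist P' P < \<epsilon> / (2 * C)" using ap by blast
      have "good1 \<Omega> u \<xi> x P' (\<epsilon>/2)" using P'(1) \<epsilon> by (simp add: J1_char)
      then obtain \<delta> where \<delta>: "\<delta> > 0" and H: "\<forall>z\<in>\<Omega>. z \<noteq> x \<and> dist z x < \<delta> \<longrightarrow>
        (\<forall>w. (\<xi> \<bullet> w) * ((u z - u x - P' *v (z - x)) \<bullet> w) \<le> \<epsilon>/2 * norm (z - x) * (w \<bullet> w))"
        unfolding good1_def by blast
      have CP: "C * norm (P' - P) \<le> \<epsilon> / 2"
      proof -
        have "norm (P' - P) < \<epsilon> / (2 * C)" using P'(2) by (simp add: dist_norm)
        then have "C * norm (P' - P) < C * (\<epsilon> / (2 * C))" using C by (intro mult_strict_left_mono) auto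
        also have "\<dots> = \<epsilon> / 2" using C by (simp add: field_simps)
        finally show ?thesis by simp
      qed
      show "good1 \<Omega> u \<xi> x P \<epsilon>" unfolding good1_def
      proof (intro exI[of _ \<delta>] conjI ballI impI allI)
        show "\<delta> > 0" by (rule \<delta>)
        fix z w assume z: "z \<in> \<Omega>" "z \<noteq> x \<and> dist z x < \<delta>"
        define y where "y = z - x"
        have eq: "u z - u x - P *v y = (u z - u x - P' *v y) + (P' - P) *v y"
          by (simp add: matrix_vector_mult_diff_rdistrib)
        have 1: "(\<xi> \<bullet> w) * ((u z - u x - P' *v y) \<bullet> w) \<le> \<epsilon>/2 * norm y * (w \<bullet> w)"
          using H z y_def by blast
        have 2: "(\<xi> \<bullet> w) * (((P' - P) *v y) \<bullet> w) \<le> norm ((P' - P) *v y) * (w \<bullet> w)"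
          by (rule pert[OF xi])
        have "norm ((P' - P) *v y) \<le> msum (P' - P) * norm y" by (rule mv_bound)
        also have "\<dots> \<le> (C * norm (P' - P)) * norm y"
          using msum_le[of "P' - P"] unfolding C_def by (intro mult_right_mono) auto
        also have "\<dots> \<le> \<epsilon>/2 * norm y" using CP by (intro mult_right_mono) auto
        finally have 3: "norm ((P' - P) *v y) * (w \<bullet> w) \<le> \<epsilon>/2 * norm y * (w \<bullet> w)"
          by (intro mult_right_mono) auto
        have "(\<xi> \<bullet> w) * ((u z - u x - P *v y) \<bullet> w)
            = (\<xi> \<bullet> w) * ((u z - u x - P' *v y) \<bullet> w) + (\<xi> \<bullet> w) * (((P' - P) *v y) \<bullet> w)"
          unfolding eq by (simp add: inner_add_left distrib_left)
        also have "\<dots> \<le> \<epsilon> * norm y * (w \<bullet> w)" using 1 2 3 by (simp add: algebra_simps)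
        finally show "(\<xi> \<bullet> w) * ((u z - u x - P *v (z - x)) \<bullet> w) \<le> \<epsilon> * norm (z - x) * (w \<bullet> w)"
          by (simp add: y_def)
      qed
    qed
  qed
  then show ?thesis by (simp add: closure_subset_eq)
qed

lemma sym_closed: "closed {X :: real^'n^'n^'m. sym_tensor X}"
  unfolding sym_tensor_def
  by (intro closed_Collect_all closed_Collect_eq continuous_intros)

lemma J2_closed:
  fixes u :: "real^'n \<Rightarrow> real^'m" and \<xi> :: "real^'m"
  assumes xi: "norm \<xi> = 1"
  shows "closed {X. (P, X) \<in> J2 \<Omega> u \<xi> x}"
proof -
  let ?S = "{X. (P, X) \<in> J2 \<Omega> u \<xi> x}"
  have "closure ?S \<subseteq> ?S"
  proof
    fix X assume Xc: "X \<in> closure ?S"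
    then have ap: "\<forall>e>0. \<exists>X'\<in>?S. dist X' X < e" by (simp add: closure_approachable)
    have "?S \<subseteq> {X. sym_tensor X}" by (auto simp: J2_char)
    then have "closure ?S \<subseteq> {X. sym_tensor X}" using sym_closed closure_minimal by blast
    then have symX: "sym_tensor X" using Xc by blast
    have "\<forall>\<epsilon>>0. good2 \<Omega> u \<xi> x P X \<epsilon>"
    proof (intro allI impI)
      fix \<epsilon> :: real assume \<epsilon>: "\<epsilon> > 0"
      define C where "C = real CARD('m) * (real CARD('n) * real CARD('n))"
      have C: "C > 0" by (simp add: C_def)
      have "\<epsilon> / C > 0" using \<epsilon> C by simp
      then obtain X' where X': "X' \<in> ?S" "dist X' X < \<epsilon> / C" using ap by blast
      have "good2 \<Omega> u \<xi> x P X' (\<epsilon>/2)" using X'(1) \<epsilon> by (simp add: J2_char)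
      then obtain \<delta> where \<delta>: "\<delta> > 0" and H: "\<forall>z\<in>\<Omega>. z \<noteq> x \<and> dist z x < \<delta> \<longrightarrow>
        (\<forall>w. (\<xi> \<bullet> w) * ((u z - u x - P *v (z - x) - (1/2) *\<^sub>R tensor_quad X' (z - x)) \<bullet> w) \<le> \<epsilon>/2 * norm (z - x)^2 * (w \<bullet> w))"
        unfolding good2_def by blast
      have CX: "C * norm (X' - X) \<le> \<epsilon>"
      proof -
        have "norm (X' - X) < \<epsilon> / C" using X'(2) by (simp add: dist_norm)
        then have "C * norm (X' - X) < C * (\<epsilon> / C)" using C by (intro mult_strict_left_mono) auto
        also have "\<dots> = \<epsilon>" using C by (simp add: field_simps)
        finally show ?thesis by simp
      qed
      show "good2 \<Omega> u \<xi> x P X \<epsilon>" unfolding good2_def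
      proof (intro exI[of _ \<delta>] conjI ballI impI allI)
        show "\<delta> > 0" by (rule \<delta>)
        fix z w assume z: "z \<in> \<Omega>" "z \<noteq> x \<and> dist z x < \<delta>"
        define y where "y = z - x"
        define r' where "r' = u z - u x - P *v y - (1/2) *\<^sub>R tensor_quad X' y"
        define v where "v = (1/2) *\<^sub>R tensor_quad (X' - X) y"
        have eq: "u z - u x - P *v y - (1/2) *\<^sub>R tensor_quad X y = r' + v"
          unfolding r'_def v_def tq_diff[symmetric] by (simp add: algebra_simps)
        have 1: "(\<xi> \<bullet> w) * (r' \<bullet> w) \<le> \<epsilon>/2 * norm y^2 * (w \<bullet> w)"
          using H z unfolding y_def r'_def by blast
        have 2: "(\<xi> \<bullet> w) * (v \<bullet> w) \<le> norm v * (w \<bullet> w)"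
          by (rule pert[OF xi])
        have "norm v = (1/2) * norm (tensor_quad (X' - X) y)" by (simp add: v_def)
        also have "\<dots> \<le> (1/2) * (C * norm (X' - X) * (norm y)^2)"
          using tq_bound[of "X' - X" y] unfolding C_def by (simp add: mult_ac)
        also have "\<dots> \<le> (1/2) * (\<epsilon> * (norm y)^2)"
          using CX by (intro mult_left_mono mult_right_mono) auto
        finally have 3: "norm v * (w \<bullet> w) \<le> \<epsilon>/2 * norm y^2 * (w \<bullet> w)"
          by (intro mult_right_mono) auto
        have "(\<xi> \<bullet> w) * ((u z - u x - P *v y - (1/2) *\<^sub>R tensor_quad X y) \<bullet> w)
            = (\<xi> \<bullet> w) * (r' \<bullet> w) + (\<xi> \<bullet> w) * (v \<bullet> w)"
          unfolding eq by (simp add: inner_add_left distrib_left)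
        also have "\<dots> \<le> \<epsilon> * norm y^2 * (w \<bullet> w)" using 1 2 3 by (simp add: algebra_simps)
        finally show "(\<xi> \<bullet> w) * ((u z - u x - P *v (z - x) - (1/2) *\<^sub>R tensor_quad X (z - x)) \<bullet> w) \<le> \<epsilon> * norm (z - x)^2 * (w \<bullet> w)"
          by (simp add: y_def)
      qed
    qed
    then show "X \<in> ?S" using symX by (simp add: J2_char)
  qed
  then show ?thesis by (simp add: closure_subset_eq)
qed

lemma J2_psd:
  assumes PX: "(P, X) \<in> J2 \<Omega> u \<xi> x" and A: "psd A"
  shows "(P, X + vec_tensor \<xi> A) \<in> J2 \<Omega> u \<xi> x"
proof -
  have At: "transpose A = A" and Ap: "\<And>z. 0 \<le> z \<bullet> (A *v z)" using A by (auto simp: psd_def)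
  have Asym: "A $ i $ j = A $ j $ i" for i j
  proof -
    have "transpose A $ j $ i = A $ j $ i" using At by simp
    then show ?thesis by (simp add: transpose_def)
  qed
  have sX: "sym_tensor X" using PX by (simp add: J2_char)
  have sym: "sym_tensor (X + vec_tensor \<xi> A)"
    using sX Asym by (simp add: sym_tensor_def vec_tensor_def)
  have "good2 \<Omega> u \<xi> x P (X + vec_tensor \<xi> A) \<epsilon>" if \<epsilon>: "\<epsilon> > 0" for \<epsilon>
  proof -
    have "good2 \<Omega> u \<xi> x P X \<epsilon>" using PX \<epsilon> by (simp add: J2_char)
    then obtain \<delta> where \<delta>: "\<delta> > 0" and H: "\<forall>z\<in>\<Omega>. z \<noteq> x \<and> dist z x < \<delta> \<longrightarrow>
        (\<forall>w. (\<xi> \<bullet> w) * ((u z - u x - P *v (z - x) - (1/2) *\<^sub>R tensor_quad X (z - x)) \<bullet> w) \<le> \<epsilon> * norm (z - x)^2 * (w \<bullet> w))"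
      unfolding good2_def by blast
    show ?thesis unfolding good2_def
    proof (intro exI[of _ \<delta>] conjI ballI impI allI)
      show "\<delta> > 0" by (rule \<delta>)
      fix z w assume z: "z \<in> \<Omega>" "z \<noteq> x \<and> dist z x < \<delta>"
      define y where "y = z - x"
      define r where "r = u z - u x - P *v y - (1/2) *\<^sub>R tensor_quad X y"
      define c where "c = y \<bullet> (A *v y)"
      have c: "c \<ge> 0" using Ap c_def by simp
      have eq: "u z - u x - P *v y - (1/2) *\<^sub>R tensor_quad (X + vec_tensor \<xi> A) y = r - (c/2) *\<^sub>R \<xi>"
        unfolding r_def c_def tq_psd by (simp add: algebra_simps)
      have "(\<xi> \<bullet> w) * ((u z - u x - P *v y - (1/2) *\<^sub>R tensor_quad (X + vec_tensor \<xi> A) y) \<bullet> w)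
          = (\<xi> \<bullet> w) * (r \<bullet> w) - (c/2) * ((\<xi> \<bullet> w) * (\<xi> \<bullet> w))"
        unfolding eq by (simp add: inner_diff_left algebra_simps)
      also have "\<dots> \<le> (\<xi> \<bullet> w) * (r \<bullet> w)" using c by simp
      also have "\<dots> \<le> \<epsilon> * norm y^2 * (w \<bullet> w)" using H z unfolding y_def r_def by blast
      finally show "(\<xi> \<bullet> w) * ((u z - u x - P *v (z - x) - (1/2) *\<^sub>R tensor_quad (X + vec_tensor \<xi> A) (z - x)) \<bullet> w) \<le> \<epsilon> * norm (z - x)^2 * (w \<bullet> w)"
        by (simp add: y_def)
    qed
  qed
  then show ?thesis using sym by (simp add: J2_char)
qed

lemma J2_unbounded:
  fixes u :: "real^'n \<Rightarrow> real^'m" and \<xi> :: "real^'m"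
  assumes xi: "norm \<xi> = 1" and ne: "J2 \<Omega> u \<xi> x \<noteq> {}"
  shows "\<not> bounded (J2 \<Omega> u \<xi> x)"
proof
  assume b: "bounded (J2 \<Omega> u \<xi> x)"
  obtain P X where PX: "(P, X) \<in> J2 \<Omega> u \<xi> x" using ne by auto
  obtain B where B: "\<forall>p\<in>J2 \<Omega> u \<xi> x. norm p \<le> B" using b by (auto simp: bounded_iff)
  define V where "V = vec_tensor \<xi> (mat 1 :: real^'n^'n)"
  have "\<xi> \<noteq> 0" using xi by auto
  then obtain a where a: "\<xi> $ a \<noteq> 0" by (auto simp: vec_eq_iff)
  obtain i :: 'n where True by simp
  have "V $ a $ i $ i \<noteq> 0" using a by (simp add: V_def vec_tensor_def mat_def)
  then have "V \<noteq> 0" by auto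
  then have nV: "norm V > 0" by simp
  have B0: "norm (P, X) \<le> B" using B PX by blast
  define t where "t = (B + norm X + 1) / norm V"
  have "0 \<le> B" using B0 norm_ge_zero[of "(P, X)"] by linarith
  then have Bp: "0 \<le> B + norm X + 1" using norm_ge_zero[of X] by linarith
  then have t: "t \<ge> 0" unfolding t_def using nV by simp
  have psd: "psd (t *\<^sub>R (mat 1 :: real^'n^'n))"
    unfolding psd_def using t by (simp add: transpose_smat scaleR_matrix_vector_assoc[symmetric])
  have vt: "vec_tensor \<xi> (t *\<^sub>R (mat 1 :: real^'n^'n)) = t *\<^sub>R V"
    by (simp add: V_def vec_eq_iff vec_tensor_def mat_def)
  have "(P, X + t *\<^sub>R V) \<in> J2 \<Omega> u \<xi> x" using J2_psd[OF PX psd] vt by simp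
  then have "norm (P, X + t *\<^sub>R V) \<le> B" using B by blast
  moreover have "norm (X + t *\<^sub>R V) \<le> norm (P, X + t *\<^sub>R V)" by (rule norm_snd_le)
  moreover have "norm (t *\<^sub>R V) \<le> norm (X + t *\<^sub>R V) + norm X"
    using norm_triangle_ineq4[of "X + t *\<^sub>R V" X] by simp
  moreover have "norm (t *\<^sub>R V) = B + norm X + 1" using t nV Bp by (simp add: t_def)
  ultimately show False by linarith
qed


theorem proposition18:
  fixes \<Omega> :: "(real^'n) set" and u :: "real^'n \<Rightarrow> real^'m"
    and x :: "real^'n" and \<xi> :: "real^'m"
  assumes "open \<Omega>" and "x \<in> \<Omega>" and "continuous (at x within \<Omega>) u"
    and "norm \<xi> = 1"
  shows "convex (J1 \<Omega> u \<xi> x) \<and> convex (J2 \<Omega> u \<xi> x)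
     \<and> closed (J1 \<Omega> u \<xi> x) \<and> (\<forall>P. closed {X. (P, X) \<in> J2 \<Omega> u \<xi> x})
     \<and> (J2 \<Omega> u \<xi> x \<noteq> {} \<longrightarrow> \<not> bounded (J2 \<Omega> u \<xi> x))
     \<and> (\<forall>P X A. (P, X) \<in> J2 \<Omega> u \<xi> x \<and> psd A \<longrightarrow>
          (P, X + vec_tensor \<xi> A) \<in> J2 \<Omega> u \<xi> x)"
proof -
  have c1: "convex (J1 \<Omega> u \<xi> x)"
    unfolding convex_def
  proof (intro ballI allI impI)
    fix P1 P2 and a b :: real
    assume h: "P1 \<in> J1 \<Omega> u \<xi> x" "P2 \<in> J1 \<Omega> u \<xi> x" "0 \<le> a" "0 \<le> b" "a + b = 1"
    show "a *\<^sub>R P1 + b *\<^sub>R P2 \<in> J1 \<Omega> u \<xi> x"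
      using h good1_conv[of \<Omega> u \<xi> x P1 _ P2 a b] by (simp add: J1_char)
  qed
  have c2: "convex (J2 \<Omega> u \<xi> x)"
    unfolding convex_def
  proof (intro ballI allI impI)
    fix p1 p2 and a b :: real
    assume h: "p1 \<in> J2 \<Omega> u \<xi> x" "p2 \<in> J2 \<Omega> u \<xi> x" "0 \<le> a" "0 \<le> b" "a + b = 1"
    obtain P1 X1 where p1: "p1 = (P1, X1)" by fastforce
    obtain P2 X2 where p2: "p2 = (P2, X2)" by fastforce
    have s1: "sym_tensor X1" and g1: "\<forall>\<epsilon>>0. good2 \<Omega> u \<xi> x P1 X1 \<epsilon>" using h(1) p1 by (auto simp: J2_char)
    have s2: "sym_tensor X2" and g2: "\<forall>\<epsilon>>0. good2 \<Omega> u \<xi> x P2 X2 \<epsilon>" using h(2) p2 by (auto simp: J2_char)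
    have "sym_tensor (a *\<^sub>R X1 + b *\<^sub>R X2)" using s1 s2 by (simp add: sym_tensor_def)
    moreover have "\<forall>\<epsilon>>0. good2 \<Omega> u \<xi> x (a *\<^sub>R P1 + b *\<^sub>R P2) (a *\<^sub>R X1 + b *\<^sub>R X2) \<epsilon>"
      using g1 g2 h(3-5) good2_conv by blast
    ultimately show "a *\<^sub>R p1 + b *\<^sub>R p2 \<in> J2 \<Omega> u \<xi> x"
      by (simp add: p1 p2 J2_char)
  qed
  show ?thesis
    using c1 c2 J1_closed[OF assms(4)] J2_closed[OF assms(4)] J2_unbounded[OF assms(4)] J2_psd
    by blast
qed

end
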